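(* For GP-EI with BPMI and any $t\in\mathbb{N}$, when $E^r(t)$ holds, $$r_t\le\big(c_\mu(t)+\phi(0)+\beta_t^{1/2}\big)\sigma_{t-1}(\mathbf{x}_t)+c_\alpha\beta_t^{1/2}\sigma_{t-1}([\mathbf{x}^*]_t)+\frac{1}{t^2},$$ where $c_\mu(t)=\log^{1/2}\!\big(\frac{t-1+\sigma^2}{2\pi\phi^2(0)\sigma^2}\big)$ and $c_\alpha=1.328$.
   Context: Setting: $d\ge1$, $r>0$, $C\subseteq[0,r]^d$ compact; $k$ positive semidefinite kernel with $k(\mathbf{x},\mathbf{x}')\le1$, $k(\mathbf{x},\mathbf{x})=1$ on $C$. $f$ is a sample path of $GP(0,k)$, Lipschitz with constant $L\ge1/(rd)$ in $\ell_1$-norm; $\mathbf{x}^*\in\arg\min_Cf$. Observations $y_t=f(\mathbf{x}_t)+\epsilon_t$, $\epsilon_t$ i.i.d. $\mathcal{N}(0,\sigma^2)$, $\sigma>0$. Posterior $\mu_t(\mathbf{x})=\mathbf{k}_t(\mathbf{x})^T(\mathbf{K}_t+\sigma^2\mathbf{I})^{-1}\mathbf{y}_{1:t}$, $\sigma_t^2(\mathbf{x})=1-\mathbf{k}_t(\mathbf{x})^T(\mathbf{K}_t+\sigma^2\mathbf{I})^{-1}\mathbf{k}_t(\mathbf{x})$ ($\mathbf{K}_t=[k(\mathbf{x}_i,\mathbf{x}_j)]_{i,j\le t}$, $\mathbf{k}_t(\mathbf{x})=[k(\mathbf{x}_i,\mathbf{x})]_{i\le t}$). BPMI incumbent $\xi_t^+=\mu_t^+=\min_{\mathbf{x}\in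 C}\mu_t(\mathbf{x})$. $EI_t(\mathbf{x})=(\xi_t^+-\mu_t(\mathbf{x}))\Phi(z_t(\mathbf{x}))+\sigma_t(\mathbf{x})\phi(z_t(\mathbf{x}))$, $z_t=(\xi_t^+-\mu_t)/\sigma_t$, $\phi,\Phi$ standard normal pdf/cdf; GP-EI picks $\mathbf{x}_t\in\arg\max_CEI_{t-1}$. $r_t=f(\mathbf{x}_t)-f(\mathbf{x}^* )$. Discretization: $\mathbb{C}_t\subseteq C$ finite, $|\mathbb{C}_t|=(Lrdt^2)^d$, with $\|\mathbf{x}-[\mathbf{x}]_t\|_1\le1/(Lt^2)$ for all $\mathbf{x}\in C$, where $[\mathbf{x}]_t$ is a closest point of $\mathbb{C}_t$ to $\mathbf{x}$. With $\delta\in(0,1)$, $\pi_t=\pi^2t^2/6$, $\beta_t=2\log(8|\mathbb{C}_t|\pi_t/\delta)$. $E^r(t)$ is the event that $|f(\mathbf{x})-\mu_{t-1}(\mathbf{x})|\le\beta_t^{1/2}\sigma_{t-1}(\mathbf{x})$ for all $\mathbf{x}\in\mathbb{C}_t$ and also $|f(\mathbf{x}_t)-\mu_{t-1}(\mathbf{x}_t)|\le\beta_t^{1/2}\sigma_{t-1}(\mathbf{x}_t)$. *)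

theory Defs
  imports "HOL-Analysis.Analysis" "HOL-Probability.Probability"
begin

abbreviation phi :: "real \<Rightarrow> real" where
  "phi \<equiv> std_normal_density"

definition Phi :: "real \<Rightarrow> real" where
  "Phi x = (LBINT u:{..x}. std_normal_density u)"

definition l1dist :: "real^'n \<Rightarrow> real^'n \<Rightarrow> real" where
  "l1dist x y = (\<Sum>i\<in>UNIV. \<bar>x$i - y$i\<bar>)"

definition psd_kernel :: "'a set \<Rightarrow> ('a \<Rightarrow> 'a \<Rightarrow> real) \<Rightarrow> bool" where
  "psd_kernel C k \<longleftrightarrow> (\<forall>x\<in>C. \<forall>y\<in>C. k x y = k y x) \<and>
     (\<forall>(n::nat) (p::nat \<Rightarrow> 'a) (c::nat \<Rightarrow> real). (\<forall>i<n. p i \<in> C) \<longrightarrow>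
        0 \<le> (\<Sum>i<n. \<Sum>j<n. c i * c j * k (p i) (p j)))"

text \<open>The n x n matrix K_n + sigma^2 I built from the data points xs 1, ..., xs n
  (0-based indices i,j < n refer to the points xs (i+1), xs (j+1)).\<close>
definition gram_reg :: "('a \<Rightarrow> 'a \<Rightarrow> real) \<Rightarrow> real \<Rightarrow> (nat \<Rightarrow> 'a) \<Rightarrow> nat \<Rightarrow> nat \<Rightarrow> real" where
  "gram_reg k \<sigma> xs i j = k (xs (Suc i)) (xs (Suc j)) + (if i = j then \<sigma>^2 else 0)"

text \<open>(A^{-1} b) for an n x n matrix A: the unique solution a of A a = b
  (vectors represented as functions on {..<n}, padded with 0).\<close>
definition lin_solve :: "nat \<Rightarrow> (nat \<Rightarrow> nat \<Rightarrow> real) \<Rightarrow> (nat \<Rightarrow> real) \<Rightarrow> nat \<Rightarrow> real" where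
  "lin_solve n A b = (THE a. (\<forall>i<n. (\<Sum>j<n. A i j * a j) = b i) \<and> (\<forall>i\<ge>n. a i = 0))"

definition post_mean :: "('a \<Rightarrow> 'a \<Rightarrow> real) \<Rightarrow> real \<Rightarrow> (nat \<Rightarrow> 'a) \<Rightarrow> (nat \<Rightarrow> real) \<Rightarrow> nat \<Rightarrow> 'a \<Rightarrow> real" where
  "post_mean k \<sigma> xs ys n x =
     (\<Sum>i<n. k (xs (Suc i)) x * lin_solve n (gram_reg k \<sigma> xs) (\<lambda>i. ys (Suc i)) i)"

definition post_var :: "('a \<Rightarrow> 'a \<Rightarrow> real) \<Rightarrow> real \<Rightarrow> (nat \<Rightarrow> 'a) \<Rightarrow> nat \<Rightarrow> 'a \<Rightarrow> real" where
  "post_var k \<sigma> xs n x =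
     1 - (\<Sum>i<n. k (xs (Suc i)) x * lin_solve n (gram_reg k \<sigma> xs) (\<lambda>i. k (xs (Suc i)) x) i)"

definition post_sd :: "('a \<Rightarrow> 'a \<Rightarrow> real) \<Rightarrow> real \<Rightarrow> (nat \<Rightarrow> 'a) \<Rightarrow> nat \<Rightarrow> 'a \<Rightarrow> real" where
  "post_sd k \<sigma> xs n x = sqrt (post_var k \<sigma> xs n x)"

definition incumbent :: "'a set \<Rightarrow> ('a \<Rightarrow> 'a \<Rightarrow> real) \<Rightarrow> real \<Rightarrow> (nat \<Rightarrow> 'a) \<Rightarrow> (nat \<Rightarrow> real) \<Rightarrow> nat \<Rightarrow> real" where
  "incumbent C k \<sigma> xs ys n = Inf (post_mean k \<sigma> xs ys n ` C)"

definition EI :: "'a set \<Rightarrow> ('a \<Rightarrow> 'a \<Rightarrow> real) \<Rightarrow> real \<Rightarrow> (nat \<Rightarrow> 'a) \<Rightarrow> (nat \<Rightarrow> real) \<Rightarrow> nat \<Rightarrow> 'a \<Rightarrow> real" where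
  "EI C k \<sigma> xs ys n x =
     (let \<xi> = incumbent C k \<sigma> xs ys n;
          m = post_mean k \<sigma> xs ys n x;
          s = post_sd k \<sigma> xs n x;
          z = (\<xi> - m) / s
      in (\<xi> - m) * Phi z + s * phi z)"

definition beta :: "nat \<Rightarrow> real \<Rightarrow> nat \<Rightarrow> real" where
  "beta cardCt \<delta> t = 2 * ln (8 * real cardCt * (pi^2 * (real t)^2 / 6) / \<delta>)"

end

theory Submission imports Defs "Jordan_Normal_Form.Determinant" begin

lemma gram_quad:
  "(\<Sum>i<n. a i * (\<Sum>j<n. gram_reg k \<sigma> xs i j * a j)) =
   (\<Sum>i<n. \<Sum>j<n. a i * a j * k (xs (Suc i)) (xs (Suc j))) + \<sigma>^2 * (\<Sum>i<n. (a i)^2)"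
proof -
  have "\<And>i. i < n \<Longrightarrow> (\<Sum>j<n. gram_reg k \<sigma> xs i j * a j) = (\<Sum>j<n. k (xs (Suc i)) (xs (Suc j)) * a j) + \<sigma>^2 * a i"
  proof -
    fix i assume "i < n"
    have "(\<Sum>j<n. gram_reg k \<sigma> xs i j * a j) = (\<Sum>j<n. k (xs (Suc i)) (xs (Suc j)) * a j + (if i = j then \<sigma>^2 * a i else 0))"
      by (intro sum.cong) (auto simp: gram_reg_def algebra_simps)
    also have "\<dots> = (\<Sum>j<n. k (xs (Suc i)) (xs (Suc j)) * a j) + \<sigma>^2 * a i"
      using \<open>i < n\<close> by (simp add: sum.distrib)
    finally show "(\<Sum>j<n. gram_reg k \<sigma> xs i j * a j) = (\<Sum>j<n. k (xs (Suc i)) (xs (Suc j)) * a j) + \<sigma>^2 * a i" .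
  qed
  then have "(\<Sum>i<n. a i * (\<Sum>j<n. gram_reg k \<sigma> xs i j * a j)) = (\<Sum>i<n. a i * ((\<Sum>j<n. k (xs (Suc i)) (xs (Suc j)) * a j) + \<sigma>^2 * a i))"
    by (intro sum.cong) auto
  also have "\<dots> = (\<Sum>i<n. \<Sum>j<n. a i * a j * k (xs (Suc i)) (xs (Suc j))) + \<sigma>^2 * (\<Sum>i<n. (a i)^2)"
    by (simp add: distrib_left sum.distrib sum_distrib_left sum_distrib_right mult_ac power2_eq_square)
  finally show ?thesis .
qed

lemma quad_nonneg:
  assumes "psd_kernel C k" "\<forall>i<n. xs (Suc i) \<in> C"
  shows "0 \<le> (\<Sum>i<n. \<Sum>j<n. a i * a j * k (xs (Suc i)) (xs (Suc j)))"
  using assms unfolding psd_kernel_def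
  by (auto dest!: spec[of _ n] spec[of _ "\<lambda>i. xs (Suc i)"] spec[of _ a])

lemma gram_inj:
  assumes "psd_kernel C k" "\<forall>i<n. xs (Suc i) \<in> C" "\<sigma> > 0"
    and "\<forall>i<n. (\<Sum>j<n. gram_reg k \<sigma> xs i j * a j) = 0"
  shows "\<forall>i<n. a i = 0"
proof -
  have "(\<Sum>i<n. a i * (\<Sum>j<n. gram_reg k \<sigma> xs i j * a j)) = 0" using assms(4) by simp
  then have "(\<Sum>i<n. \<Sum>j<n. a i * a j * k (xs (Suc i)) (xs (Suc j))) + \<sigma>^2 * (\<Sum>i<n. (a i)^2) = 0"
    by (simp add: gram_quad)
  moreover have "0 \<le> (\<Sum>i<n. \<Sum>j<n. a i * a j * k (xs (Suc i)) (xs (Suc j)))"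
    using quad_nonneg[OF assms(1,2)] .
  moreover have "0 \<le> (\<Sum>i<n. (a i)^2)" by (simp add: sum_nonneg)
  ultimately have "(\<Sum>i<n. (a i)^2) = 0" using assms(3)
    by (smt (verit) mult_pos_pos zero_less_power)
  then show ?thesis by (simp add: sum_nonneg_eq_0_iff)
qed

lemma gram_mat_row:
  assumes "i < n" "v \<in> carrier_vec n"
  shows "(mat n n (\<lambda>(i,j). gram_reg k \<sigma> xs i j) *\<^sub>v v) $ i = (\<Sum>j<n. gram_reg k \<sigma> xs i j * (if j < n then v $ j else 0))"
  using assms by (auto simp: scalar_prod_def row_def lessThan_atLeast0 intro!: sum.cong)

lemma solve_ex1:
  assumes "psd_kernel C k" "\<forall>i<n. xs (Suc i) \<in> C" "\<sigma> > 0"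
  shows "\<exists>!a. (\<forall>i<n. (\<Sum>j<n. gram_reg k \<sigma> xs i j * a j) = b i) \<and> (\<forall>i\<ge>n. a i = (0::real))"
proof (rule ex_ex1I)
  define M where "M = mat n n (\<lambda>(i,j). gram_reg k \<sigma> xs i j)"
  have M: "M \<in> carrier_mat n n" unfolding M_def by simp
  have "det M \<noteq> 0"
  proof
    assume "det M = 0"
    then obtain v where v: "v \<in> carrier_vec n" "v \<noteq> 0\<^sub>v n" "M *\<^sub>v v = 0\<^sub>v n"
      using det_0_iff_vec_prod_zero[OF M] by blast
    define a where "a j = (if j < n then v $ j else 0)" for j
    have "\<forall>i<n. (\<Sum>j<n. gram_reg k \<sigma> xs i j * a j) = 0"
    proof (intro allI impI)
      fix i assume i: "i < n"
      have "(M *\<^sub>v v) $ i = 0" using v(3) i by simp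
      then show "(\<Sum>j<n. gram_reg k \<sigma> xs i j * a j) = 0"
        using gram_mat_row[OF i v(1), of k \<sigma> xs] unfolding M_def a_def by simp
    qed
    then have "\<forall>i<n. a i = 0" using gram_inj[OF assms] by blast
    then have "v = 0\<^sub>v n" using v(1) unfolding a_def by (auto simp: vec_eq_iff)
    with v(2) show False by simp
  qed
  from det_non_zero_imp_unit[OF M this] have "M \<in> Units (ring_mat TYPE(real) n ())" .
  then obtain B where B: "B \<in> carrier_mat n n" "M * B = 1\<^sub>m n"
    unfolding Units_def ring_mat_def by auto
  define x where "x = B *\<^sub>v vec n b"
  have x: "x \<in> carrier_vec n" unfolding x_def using B by simp
  have Mx: "M *\<^sub>v x = vec n b"
    unfolding x_def using B M by (simp add: assoc_mult_mat_vec[symmetric, of M n n B n])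
  define a where "a j = (if j < n then x $ j else 0)" for j
  show "\<exists>a. (\<forall>i<n. (\<Sum>j<n. gram_reg k \<sigma> xs i j * a j) = b i) \<and> (\<forall>i\<ge>n. a i = (0::real))"
  proof (intro exI conjI allI impI)
    fix i assume i: "i < n"
    have "(M *\<^sub>v x) $ i = b i" using Mx i by simp
    then show "(\<Sum>j<n. gram_reg k \<sigma> xs i j * a j) = b i"
      using gram_mat_row[OF i x, of k \<sigma> xs] unfolding M_def a_def by simp
  next
    fix i assume "n \<le> i" then show "a i = 0" unfolding a_def by simp
  qed
next
  fix a a' assume a: "(\<forall>i<n. (\<Sum>j<n. gram_reg k \<sigma> xs i j * a j) = b i) \<and> (\<forall>i\<ge>n. a i = (0::real))"
    and a': "(\<forall>i<n. (\<Sum>j<n. gram_reg k \<sigma> xs i j * a' j) = b i) \<and> (\<forall>i\<ge>n. a' i = (0::real))"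
  have "\<forall>i<n. (\<Sum>j<n. gram_reg k \<sigma> xs i j * (a j - a' j)) = 0"
    using a a' by (simp add: right_diff_distrib sum_subtractf)
  then have "\<forall>i<n. a i - a' i = 0" using gram_inj[OF assms, of "\<lambda>j. a j - a' j"] by blast
  then show "a = a'" using a a' by (metis eq_iff_diff_eq_0 ext not_less)
qed

lemma lin_solve_eq:
  assumes "psd_kernel C k" "\<forall>i<n. xs (Suc i) \<in> C" "\<sigma> > 0" "i < n"
  shows "(\<Sum>j<n. gram_reg k \<sigma> xs i j * lin_solve n (gram_reg k \<sigma> xs) b j) = b i"
  using theI'[OF solve_ex1[OF assms(1-3), of b]] assms(4) unfolding lin_solve_def by blast

lemma k_ge:
  assumes "psd_kernel C k" "\<forall>x\<in>C. k x x = 1" "x \<in> C" "y \<in> C"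
  shows "-1 \<le> k x y"
proof -
  have sym: "k y x = k x y" using assms(1,3,4) unfolding psd_kernel_def by auto
  have "0 \<le> k x x + k x y + (k y x + k y y)"
  proof -
    have H: "\<forall>(n::nat) (p::nat \<Rightarrow> 'a) (c::nat \<Rightarrow> real). (\<forall>i<n. p i \<in> C) \<longrightarrow>
        0 \<le> (\<Sum>i<n. \<Sum>j<n. c i * c j * k (p i) (p j))" using assms(1) unfolding psd_kernel_def by blast
    show ?thesis using H[rule_format, of 2 "\<lambda>i. if i = 0 then x else y" "\<lambda>_. 1"] assms(3,4) by (auto simp: numeral_2_eq_2 less_Suc_eq)
  qed
  then show ?thesis using assms sym by (simp add: numeral_2_eq_2)
qed

lemma var_bounds:
  assumes psd: "psd_kernel C k" and xsC: "\<forall>i<n. xs (Suc i) \<in> C" and sp: "\<sigma> > 0" and xC: "x \<in> C"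
    and diag: "\<forall>x\<in>C. k x x = 1" and le1: "\<forall>x\<in>C. \<forall>y\<in>C. k x y \<le> 1"
  shows "\<sigma>^2 / (real n + \<sigma>^2) \<le> post_var k \<sigma> xs n x \<and> post_var k \<sigma> xs n x \<le> 1"
proof -
  define u where "u = lin_solve n (gram_reg k \<sigma> xs) (\<lambda>i. k (xs (Suc i)) x)"
  define q where "q = (\<Sum>i<n. k (xs (Suc i)) x * u i)"
  define Q where "Q = (\<Sum>i<n. \<Sum>j<n. u i * u j * k (xs (Suc i)) (xs (Suc j)))"
  define S where "S = (\<Sum>i<n. (u i)^2)"
  have pv: "post_var k \<sigma> xs n x = 1 - q" unfolding post_var_def q_def u_def ..
  have Au: "\<And>i. i < n \<Longrightarrow> (\<Sum>j<n. gram_reg k \<sigma> xs i j * u j) = k (xs (Suc i)) x"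
    unfolding u_def by (rule lin_solve_eq[OF psd xsC sp])
  have "q = (\<Sum>i<n. u i * (\<Sum>j<n. gram_reg k \<sigma> xs i j * u j))"
    unfolding q_def by (intro sum.cong) (auto simp: Au)
  then have qQS: "q = Q + \<sigma>^2 * S" unfolding Q_def S_def by (simp add: gram_quad)
  have Q0: "0 \<le> Q" unfolding Q_def by (rule quad_nonneg[OF psd xsC])
  have S0: "0 \<le> S" unfolding S_def by (simp add: sum_nonneg)
  have symx: "\<And>i. i < n \<Longrightarrow> k x (xs (Suc i)) = k (xs (Suc i)) x"
    using psd xsC xC unfolding psd_kernel_def by auto
  define p where "p i = (if i < n then xs (Suc i) else x)" for i
  define c where "c i = (if i < n then u i else - q)" for i
  have pC: "\<forall>i<Suc n. p i \<in> C" using xsC xC unfolding p_def by auto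
  have "0 \<le> (\<Sum>i<Suc n. \<Sum>j<Suc n. c i * c j * k (p i) (p j))"
    using psd pC unfolding psd_kernel_def by blast
  also have "\<dots> = Q - q^2"
  proof -
    have e1: "(\<Sum>i<Suc n. \<Sum>j<Suc n. c i * c j * k (p i) (p j)) =
      (\<Sum>i<n. (\<Sum>j<n. c i * c j * k (p i) (p j)) + c i * c n * k (p i) (p n))
       + ((\<Sum>j<n. c n * c j * k (p n) (p j)) + c n * c n * k (p n) (p n))"
      by (simp add: sum.lessThan_Suc)
    have e2: "(\<Sum>i<n. (\<Sum>j<n. c i * c j * k (p i) (p j)) + c i * c n * k (p i) (p n)) = Q - q * q"
      unfolding Q_def q_def c_def p_def by (simp add: sum.distrib sum_subtractf sum_distrib_left sum_distrib_right mult_ac)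
    have e3: "(\<Sum>j<n. c n * c j * k (p n) (p j)) = - q * q"
    proof -
      have "(\<Sum>j<n. c n * c j * k (p n) (p j)) = (\<Sum>j<n. (- q) * (k (xs (Suc j)) x * u j))"
        unfolding c_def p_def by (intro sum.cong) (auto simp: symx)
      also have "\<dots> = (- q) * (\<Sum>j<n. k (xs (Suc j)) x * u j)" by (rule sum_distrib_left[symmetric])
      also have "\<dots> = - q * q" unfolding q_def by simp
      finally show ?thesis .
    qed
    have e4: "c n * c n * k (p n) (p n) = q * q" unfolding c_def p_def using diag xC by simp
    show ?thesis using e1 e2 e3 e4 by (simp add: power2_eq_square)
  qed
  finally have qQ: "q^2 \<le> Q" by simp
  have kabs: "\<And>i j. i < n \<Longrightarrow> j < n \<Longrightarrow> \<bar>k (xs (Suc i)) (xs (Suc j))\<bar> \<le> 1"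
    using k_ge[OF psd diag] le1 xsC by (simp add: abs_le_iff)
  have "Q \<le> (\<Sum>i<n. \<Sum>j<n. ((u i)^2 + (u j)^2) / 2)"
    unfolding Q_def
  proof (intro sum_mono)
    fix i j assume i: "i \<in> {..<n}" and j: "j \<in> {..<n}"
    have "u i * u j * k (xs (Suc i)) (xs (Suc j)) \<le> \<bar>u i * u j\<bar> * \<bar>k (xs (Suc i)) (xs (Suc j))\<bar>"
      by (metis abs_ge_self abs_mult)
    also have "\<dots> \<le> \<bar>u i * u j\<bar>" using kabs[of i j] i j by (simp add: mult_left_le)
    also have "\<dots> \<le> ((u i)^2 + (u j)^2) / 2"
    proof -
      have "0 \<le> (\<bar>u i\<bar> - \<bar>u j\<bar>)^2" by simp
      then show ?thesis by (simp add: power2_diff abs_mult)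
    qed
    finally show "u i * u j * k (xs (Suc i)) (xs (Suc j)) \<le> ((u i)^2 + (u j)^2) / 2" .
  qed
  also have "\<dots> = real n * S"
  proof -
    have "(\<Sum>i<n. \<Sum>j<n. ((u i)^2 + (u j)^2) / 2) = (\<Sum>i<n. real n * (u i)^2 / 2 + S / 2)"
      unfolding S_def by (intro sum.cong refl) (simp add: add_divide_distrib sum.distrib sum_divide_distrib)
    also have "\<dots> = (\<Sum>i<n. real n * (u i)^2) / 2 + real n * S / 2"
      by (simp add: sum.distrib sum_divide_distrib)
    also have "\<dots> = real n * S" unfolding S_def by (simp add: sum_distrib_left)
    finally show ?thesis .
  qed
  finally have QS: "Q \<le> real n * S" .
  have q0: "0 \<le> q" using qQS Q0 S0 sp by simp
  have "q^2 * (real n + \<sigma>^2) \<le> Q * (real n + \<sigma>^2)" using qQ sp by (intro mult_right_mono) auto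
  also have "\<dots> \<le> q * real n" using QS qQS sp by (simp add: algebra_simps)
  finally have key: "q * (q * (real n + \<sigma>^2)) \<le> q * real n" by (simp add: power2_eq_square mult_ac)
  have "q * (real n + \<sigma>^2) \<le> real n"
  proof (cases "q = 0")
    case True then show ?thesis by simp
  next
    case False then show ?thesis using key q0 by simp
  qed
  moreover have D: "0 < real n + \<sigma>^2" using sp by (simp add: add_nonneg_pos)
  ultimately have "q \<le> real n / (real n + \<sigma>^2)" by (simp add: pos_le_divide_eq)
  then have "1 - q \<ge> \<sigma>^2 / (real n + \<sigma>^2)" using D by (simp add: field_simps)
  then show ?thesis using pv q0 by simp
qed

lemma mean_bdd:
  assumes psd: "psd_kernel C k" and xsC: "\<forall>i<n. xs (Suc i) \<in> C"
    and diag: "\<forall>x\<in>C. k x x = 1" and le1: "\<forall>x\<in>C. \<forall>y\<in>C. k x y \<le> 1"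
  shows "bdd_below (post_mean k \<sigma> xs ys n ` C)"
proof -
  define a where "a = lin_solve n (gram_reg k \<sigma> xs) (\<lambda>i. ys (Suc i))"
  have "\<forall>x\<in>C. - (\<Sum>i<n. \<bar>a i\<bar>) \<le> post_mean k \<sigma> xs ys n x"
  proof
    fix x assume x: "x \<in> C"
    have "- (\<Sum>i<n. \<bar>a i\<bar>) = (\<Sum>i<n. - \<bar>a i\<bar>)" by (simp add: sum_negf)
    also have "\<dots> \<le> (\<Sum>i<n. k (xs (Suc i)) x * a i)"
    proof (intro sum_mono)
      fix i assume i: "i \<in> {..<n}"
      have "\<bar>k (xs (Suc i)) x\<bar> \<le> 1" using k_ge[OF psd diag, of "xs (Suc i)" x] le1 xsC x i by (simp add: abs_le_iff)
      then have "\<bar>k (xs (Suc i)) x * a i\<bar> \<le> \<bar>a i\<bar>" by (simp add: abs_mult mult_left_le_one_le)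
      then show "- \<bar>a i\<bar> \<le> k (xs (Suc i)) x * a i" by linarith
    qed
    finally show "- (\<Sum>i<n. \<bar>a i\<bar>) \<le> post_mean k \<sigma> xs ys n x" unfolding post_mean_def a_def .
  qed
  then show ?thesis by (auto simp: bdd_below_def)
qed

lemma Phi_nonneg: "0 \<le> Phi x"
  unfolding Phi_def set_lebesgue_integral_def by (intro integral_nonneg_AE) (auto simp: indicator_def)

lemma Phi_le1: "Phi x \<le> 1"
proof -
  have "Phi x = (\<integral>u. indicator {..x} u *\<^sub>R std_normal_density u \<partial>lborel)"
    unfolding Phi_def set_lebesgue_integral_def ..
  also have "\<dots> \<le> (\<integral>u. std_normal_density u \<partial>lborel)"
    by (intro integral_mono integrable_mult_indicator) (auto simp: indicator_def)
  also have "\<dots> = 1" by simp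
  finally show ?thesis .
qed

lemma phi_eq: "phi z = exp (- (z^2) / 2) / sqrt (2 * pi)"
  by (simp add: std_normal_density_def)

lemma phi0_sq: "(phi 0)^2 = 1 / (2 * pi)"
  by (simp add: phi_eq power_divide)

lemma phi_mono: assumes "\<bar>a\<bar> \<le> \<bar>b\<bar>" shows "phi b \<le> phi a"
proof -
  have "b^2 \<ge> a^2" using assms by (metis abs_ge_zero power2_abs power_mono)
  then show ?thesis unfolding phi_eq by (intro divide_right_mono) auto
qed

lemma EI_near:
  assumes x: "x \<in> C" and e: "\<epsilon> > 0" and slb: "slb > 0"
    and sx: "slb \<le> post_sd k \<sigma> xs n x"
    and xi1: "incumbent C k \<sigma> xs ys n \<le> post_mean k \<sigma> xs ys n x"
    and xi2: "post_mean k \<sigma> xs ys n x < incumbent C k \<sigma> xs ys n + \<epsilon>"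
  shows "- \<epsilon> + slb * phi (\<epsilon> / slb) \<le> EI C k \<sigma> xs ys n x"
proof -
  define d where "d = incumbent C k \<sigma> xs ys n - post_mean k \<sigma> xs ys n x"
  define s where "s = post_sd k \<sigma> xs n x"
  define z where "z = d / s"
  have EI: "EI C k \<sigma> xs ys n x = d * Phi z + s * phi z"
    unfolding EI_def d_def s_def z_def Let_def ..
  have s0: "0 < s" using sx slb s_def by linarith
  have d: "- \<epsilon> < d" "d \<le> 0" using xi1 xi2 d_def by auto
  have "- \<epsilon> \<le> d * Phi z"
  proof -
    have "- \<epsilon> \<le> - \<epsilon> * Phi z" using Phi_le1[of z] e by simp
    also have "\<dots> \<le> d * Phi z" using d Phi_nonneg[of z] by (intro mult_right_mono) auto
    finally show ?thesis .
  qed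
  moreover have "slb * phi (\<epsilon> / slb) \<le> s * phi z"
  proof -
    have "\<bar>z\<bar> = - d / s" using d s0 z_def by (simp add: abs_div)
    also have "\<dots> \<le> \<epsilon> / s" using d s0 by (intro divide_right_mono) auto
    also have "\<dots> \<le> \<epsilon> / slb" using sx s_def slb e by (intro divide_left_mono) auto
    finally have "\<bar>z\<bar> \<le> \<bar>\<epsilon> / slb\<bar>" using e slb by simp
    then have "phi (\<epsilon> / slb) \<le> phi z" by (rule phi_mono)
    then show ?thesis using sx s_def slb by (intro mult_mono) auto
  qed
  ultimately show ?thesis using EI by linarith
qed

theorem mainTheorem5:
  fixes C :: "(real^'n) set" and k :: "real^'n \<Rightarrow> real^'n \<Rightarrow> real"
    and f :: "real^'n \<Rightarrow> real" and xs :: "nat \<Rightarrow> real^'n"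
    and eps ys :: "nat \<Rightarrow> real" and r L \<sigma> \<delta> :: real and xstar :: "real^'n"
    and Ct :: "nat \<Rightarrow> (real^'n) set" and proj :: "nat \<Rightarrow> real^'n \<Rightarrow> real^'n"
    and t :: nat
  assumes r_pos: "r > 0"
    and C_compact: "compact C"
    and C_box: "\<forall>x\<in>C. \<forall>i. 0 \<le> x$i \<and> x$i \<le> r"
    and k_psd: "psd_kernel C k"
    and k_le1: "\<forall>x\<in>C. \<forall>y\<in>C. k x y \<le> 1"
    and k_diag: "\<forall>x\<in>C. k x x = 1"
    and L_ge: "L \<ge> 1 / (r * real CARD('n))"
    and f_lip: "\<forall>x\<in>C. \<forall>y\<in>C. \<bar>f x - f y\<bar> \<le> L * l1dist x y"
    and xstar_min: "xstar \<in> C" "\<forall>x\<in>C. f xstar \<le> f x"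
    and sigma_pos: "\<sigma> > 0"
    and obs: "\<forall>s\<ge>1. ys s = f (xs s) + eps s"
    and gp_ei: "\<forall>s\<ge>1. xs s \<in> C \<and>
                  (\<forall>x\<in>C. EI C k \<sigma> xs ys (s - 1) x \<le> EI C k \<sigma> xs ys (s - 1) (xs s))"
    and discr: "\<forall>s\<ge>1. finite (Ct s) \<and> Ct s \<subseteq> C \<and>
                  real (card (Ct s)) = (L * r * real CARD('n) * (real s)^2) ^ CARD('n) \<and>
                  (\<forall>x\<in>C. proj s x \<in> Ct s \<and> (\<forall>c\<in>Ct s. l1dist x (proj s x) \<le> l1dist x c) \<and>
                           l1dist x (proj s x) \<le> 1 / (L * (real s)^2))"
    and delta: "0 < \<delta>" "\<delta> < 1"
    and t_pos: "t \<ge> 1"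
    and Er: "(\<forall>x\<in>Ct t. \<bar>f x - post_mean k \<sigma> xs ys (t - 1) x\<bar>
                 \<le> sqrt (beta (card (Ct t)) \<delta> t) * post_sd k \<sigma> xs (t - 1) x) \<and>
             \<bar>f (xs t) - post_mean k \<sigma> xs ys (t - 1) (xs t)\<bar>
                 \<le> sqrt (beta (card (Ct t)) \<delta> t) * post_sd k \<sigma> xs (t - 1) (xs t)"
  shows "f (xs t) - f xstar \<le>
     (sqrt (ln ((real t - 1 + \<sigma>^2) / (2 * pi * (phi 0)^2 * \<sigma>^2))) + phi 0
        + sqrt (beta (card (Ct t)) \<delta> t)) * post_sd k \<sigma> xs (t - 1) (xs t)
     + 1.328 * sqrt (beta (card (Ct t)) \<delta> t) * post_sd k \<sigma> xs (t - 1) (proj t xstar)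
     + 1 / (real t)^2"

proof -
  define n where "n = t - 1"
  have tn: "real t - 1 = real n" using t_pos unfolding n_def by (simp add: of_nat_diff)
  have xsC: "\<forall>i<n. xs (Suc i) \<in> C" using gp_ei by auto
  have xtC: "xs t \<in> C" and EImax: "\<forall>x\<in>C. EI C k \<sigma> xs ys n x \<le> EI C k \<sigma> xs ys n (xs t)"
    using gp_ei t_pos unfolding n_def by auto
  define lb where "lb = \<sigma>^2 / (real n + \<sigma>^2)"
  define slb where "slb = sqrt lb"
  have D: "0 < real n + \<sigma>^2" using sigma_pos by (simp add: add_nonneg_pos)
  have lb0: "0 < lb" unfolding lb_def using D sigma_pos by simp
  have slb0: "0 < slb" unfolding slb_def using lb0 by simp
  have sdb: "\<And>x. x \<in> C \<Longrightarrow> slb \<le> post_sd k \<sigma> xs n x \<and> post_sd k \<sigma> xs n x \<le> 1"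
    using var_bounds[OF k_psd xsC sigma_pos _ k_diag k_le1] unfolding post_sd_def slb_def lb_def
    by (auto intro: real_sqrt_le_mono)
  define \<xi> where "\<xi> = incumbent C k \<sigma> xs ys n"
  have bdd: "bdd_below (post_mean k \<sigma> xs ys n ` C)" by (rule mean_bdd[OF k_psd xsC k_diag k_le1])
  have xi_le: "\<And>x. x \<in> C \<Longrightarrow> \<xi> \<le> post_mean k \<sigma> xs ys n x"
    unfolding \<xi>_def incumbent_def using bdd by (intro cInf_lower) auto
  have near: "\<And>e. e > 0 \<Longrightarrow> \<exists>x\<in>C. post_mean k \<sigma> xs ys n x < \<xi> + e"
  proof -
    fix e :: real assume e: "e > 0"
    have "Inf (post_mean k \<sigma> xs ys n ` C) < \<xi> + e" unfolding \<xi>_def incumbent_def using e by simp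
    moreover have "post_mean k \<sigma> xs ys n ` C \<noteq> {}" using xstar_min by auto
    ultimately show "\<exists>x\<in>C. post_mean k \<sigma> xs ys n x < \<xi> + e" by (auto simp: cInf_less_iff[OF _ bdd])
  qed
  define E where "E = EI C k \<sigma> xs ys n (xs t)"
  have Elow: "\<And>e. e > 0 \<Longrightarrow> - e + slb * phi (e / slb) \<le> E"
  proof -
    fix e :: real assume e: "e > 0"
    obtain x where x: "x \<in> C" "post_mean k \<sigma> xs ys n x < \<xi> + e" using near[OF e] by blast
    have "- e + slb * phi (e / slb) \<le> EI C k \<sigma> xs ys n x"
      using EI_near[OF x(1) e slb0] sdb[OF x(1)] xi_le[OF x(1)] x(2) unfolding \<xi>_def by blast
    also have "\<dots> \<le> E" using EImax x(1) E_def by blast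
    finally show "- e + slb * phi (e / slb) \<le> E" .
  qed
  have Ebig: "slb * phi 0 \<le> E"
  proof -
    have lim: "((\<lambda>e. - e + slb * phi (e / slb)) \<longlongrightarrow> - 0 + slb * phi (0 / slb)) (at_right 0)"
      unfolding phi_eq using slb0 by (intro tendsto_intros) auto
    have ev: "\<forall>\<^sub>F e in at_right (0::real). - e + slb * phi (e / slb) \<le> E"
      using Elow by (auto simp: eventually_at_right_field intro!: exI[of _ 1])
    have "- 0 + slb * phi (0 / slb) \<le> E"
      by (rule tendsto_le[OF trivial_limit_at_right_real tendsto_const lim ev])
    then show ?thesis by simp
  qed
  define m where "m = post_mean k \<sigma> xs ys n (xs t)"
  define s where "s = post_sd k \<sigma> xs n (xs t)"
  have s_b: "slb \<le> s" "s \<le> 1" using sdb[OF xtC] s_def by auto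
  define X where "X = ln ((real n + \<sigma>^2) / \<sigma>^2)"
  have X0: "0 \<le> X" unfolding X_def using sigma_pos by simp
  have cm: "sqrt (ln ((real t - 1 + \<sigma>^2) / (2 * pi * (phi 0)^2 * \<sigma>^2))) = sqrt X"
    unfolding X_def tn phi0_sq by simp
  have mxi: "m - \<xi> \<le> sqrt X * s"
  proof (cases "m \<le> \<xi>")
    case True
    have "0 \<le> sqrt X * s" using X0 s_b slb0 by (intro mult_nonneg_nonneg) auto
    then show ?thesis using True by linarith
  next
    case False
    define z where "z = (\<xi> - m) / s"
    have s0: "0 < s" using s_b slb0 by linarith
    have "E = (\<xi> - m) * Phi z + s * phi z"
      unfolding E_def EI_def z_def m_def s_def \<xi>_def Let_def ..
    also have "\<dots> \<le> s * phi z" using False Phi_nonneg[of z]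
      by (simp add: mult_nonneg_nonpos2 mult_nonpos_nonneg)
    finally have "slb * phi 0 \<le> s * phi z" using Ebig by linarith
    also have "\<dots> \<le> phi z" using s_b slb0 by (intro mult_left_le_one_le) auto
    finally have "slb * phi 0 \<le> phi z" .
    then have "slb \<le> exp (- (z^2) / 2)" unfolding phi_eq by (simp add: divide_right_mono_neg field_simps)
    then have "ln slb \<le> - (z^2) / 2" using slb0 by (metis ln_exp ln_le_cancel_iff exp_gt_zero)
    moreover have "ln slb = - X / 2"
    proof -
      have "ln slb = ln lb / 2" unfolding slb_def using lb0 by (simp add: ln_sqrt)
      also have "ln lb = - X" unfolding lb_def X_def using sigma_pos D by (simp add: ln_div)
      finally show ?thesis by simp
    qed
    ultimately have "z^2 \<le> X" by simp
    then have "\<bar>z\<bar> \<le> sqrt X" by (metis real_sqrt_abs real_sqrt_le_mono)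
    then have "- z \<le> sqrt X" by linarith
    then have "- z * s \<le> sqrt X * s" using s0 by (intro mult_right_mono) auto
    moreover have "- z * s = m - \<xi>" unfolding z_def using s0 by (simp add: field_simps)
    ultimately show ?thesis by simp
  qed
  define p where "p = proj t xstar"
  have pCt: "p \<in> Ct t" and pl1: "l1dist xstar p \<le> 1 / (L * (real t)^2)"
    using discr t_pos xstar_min(1) unfolding p_def by auto
  have CtC: "Ct t \<subseteq> C" "finite (Ct t)" using discr t_pos by auto
  have pC: "p \<in> C" using pCt CtC by auto
  have "0 < r * real CARD('n)" using r_pos by simp
  then have L0: "L > 0" using L_ge by (meson less_le_trans zero_less_divide_1_iff)
  have lip: "f p - f xstar \<le> 1 / (real t)^2"
  proof -
    have "f p - f xstar \<le> L * l1dist xstar p" using f_lip xstar_min(1) pC by fastforce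
    also have "\<dots> \<le> L * (1 / (L * (real t)^2))" using pl1 L0 by (intro mult_left_mono) auto
    also have "\<dots> = 1 / (real t)^2" using L0 by simp
    finally show ?thesis .
  qed
  define b where "b = sqrt (beta (card (Ct t)) \<delta> t)"
  have b0: "0 \<le> b"
  proof -
    have c1: "1 \<le> real (card (Ct t))" using pCt CtC by (simp add: Suc_le_eq card_gt_0_iff) blast
    have pi3: "3 \<le> pi" using pi_gt3 by simp
    have p9: "9 \<le> pi^2" using power_mono[OF pi3, of 2] by simp
    have t1: "1 \<le> (real t)^2" using t_pos by simp
    have "9 * 1 \<le> pi^2 * (real t)^2" using p9 t1 by (intro mult_mono) auto
    then have h1: "1 \<le> pi^2 * (real t)^2 / 6" by simp
    have "1 * 1 \<le> (8 * real (card (Ct t))) * (pi^2 * (real t)^2 / 6)" using c1 h1 by (intro mult_mono) auto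
    then have "1 \<le> 8 * real (card (Ct t)) * (pi^2 * (real t)^2 / 6)" by simp
    also have "\<dots> \<le> 8 * real (card (Ct t)) * (pi^2 * (real t)^2 / 6) / \<delta>"
    proof -
      let ?A = "8 * real (card (Ct t)) * (pi^2 * (real t)^2 / 6)"
      have "?A * \<delta> \<le> ?A * 1" using delta calculation by (intro mult_left_mono) auto
      then show ?thesis using delta by (simp add: le_divide_eq)
    qed
    finally show ?thesis unfolding b_def beta_def by simp
  qed
  define sp where "sp = post_sd k \<sigma> xs n p"
  have sp0: "0 \<le> sp" using sdb[OF pC] slb0 sp_def by linarith
  have e1: "f (xs t) \<le> m + b * s" using Er unfolding m_def b_def s_def n_def by linarith
  have e2: "post_mean k \<sigma> xs ys n p - b * sp \<le> f p" using Er pCt unfolding b_def sp_def n_def by fastforce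
  have e3: "\<xi> \<le> post_mean k \<sigma> xs ys n p" using xi_le[OF pC] .
  have "f (xs t) - f xstar \<le> sqrt X * s + b * s + b * sp + 1 / (real t)^2"
    using e1 e2 e3 mxi lip by linarith
  also have "\<dots> \<le> (sqrt X + phi 0 + b) * s + 1.328 * b * sp + 1 / (real t)^2"
  proof -
    have "0 \<le> phi 0 * s" using s_b slb0 by simp
    moreover have "b * sp \<le> 1.328 * b * sp" using b0 sp0 by (simp add: mult_nonneg_nonneg)
    ultimately show ?thesis by (simp add: algebra_simps)
  qed
  finally show ?thesis unfolding cm[symmetric] b_def s_def sp_def p_def n_def .
qed

end
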